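(* Let $K$ be a field of characteristic $0$ and let $S$ be a finite set of non-zero integers. Then there exists a positive integer $N$ such that $X_N^S=K^S$.
   Context: $K^S$ denotes the $K$-algebra of all functions $S\to K$ (with pointwise operations). Define $\gamma^S\colon K^*\to K^S$ by $\gamma^S(x)(s):=x^s$ for $s\in S$. For a positive integer $k$, let $X_k^S:=\{\sum_{i=1}^k\gamma^S(x_i)-\sum_{j=1}^k\gamma^S(y_j) : x_1,\dots,x_k,y_1,\dots,y_k\in K^*\}\subseteq K^S$. *)

theory Defs
  imports Main "HOL-Library.FuncSet"
begin

text \<open>Elements of K^S are modelled as extensional functions on S (PiE S UNIV).\<close>

definition gammaS :: "int set \<Rightarrow> 'k::field \<Rightarrow> (int \<Rightarrow> 'k)" where
  "gammaS S x = (\<lambda>s\<in>S. x powi s)"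

definition XS :: "int set \<Rightarrow> nat \<Rightarrow> (int \<Rightarrow> 'k::field) set" where
  "XS S k = {(\<lambda>s\<in>S. (\<Sum>i<k. gammaS S (x i) s) - (\<Sum>j<k. gammaS S (y j) s)) | x y.
              (\<forall>i<k. x i \<noteq> 0) \<and> (\<forall>j<k. y j \<noteq> 0)}"

end

theory Submission
  imports Defs
begin


definition rep :: "int set \<Rightarrow> nat \<Rightarrow> (int \<Rightarrow> 'k::field) \<Rightarrow> bool" where
  "rep S k v \<longleftrightarrow> (\<exists>x y. (\<forall>i<k. x i \<noteq> 0) \<and> (\<forall>j<k. y j \<noteq> 0) \<and>
      (\<forall>s\<in>S. v s = (\<Sum>i<k. x i powi s) - (\<Sum>j<k. y j powi s)))"

lemma sum_split_nat: "(\<Sum>i<a+b. f i) = (\<Sum>i<a. f i) + (\<Sum>i<b. f (a+i))" for f :: "nat \<Rightarrow> 'a::comm_monoid_add"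
  by (induction b) (auto simp: add.assoc)

lemma rep_cong: "rep S k v \<Longrightarrow> (\<And>s. s \<in> S \<Longrightarrow> v s = w s) \<Longrightarrow> rep S k w"
  unfolding rep_def by metis

lemma rep_zero: "rep S 0 (\<lambda>s. 0)"
  unfolding rep_def by auto

lemma rep_add:
  assumes "rep S a v" "rep S b w"
  shows "rep S (a+b) (\<lambda>s. v s + w s)"
proof -
  from assms(1) obtain x1 y1 where h1: "\<forall>i<a. x1 i \<noteq> 0" "\<forall>j<a. y1 j \<noteq> 0"
    "\<forall>s\<in>S. v s = (\<Sum>i<a. x1 i powi s) - (\<Sum>j<a. y1 j powi s)" unfolding rep_def by blast
  from assms(2) obtain x2 y2 where h2: "\<forall>i<b. x2 i \<noteq> 0" "\<forall>j<b. y2 j \<noteq> 0"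
    "\<forall>s\<in>S. w s = (\<Sum>i<b. x2 i powi s) - (\<Sum>j<b. y2 j powi s)" unfolding rep_def by blast
  define x where "x i = (if i < a then x1 i else x2 (i - a))" for i
  define y where "y i = (if i < a then y1 i else y2 (i - a))" for i
  show ?thesis unfolding rep_def
  proof (intro exI conjI allI impI ballI)
    fix i assume "i < a + b" thus "x i \<noteq> 0" using h1 h2 by (auto simp: x_def)
  next
    fix i assume "i < a + b" thus "y i \<noteq> 0" using h1 h2 by (auto simp: y_def)
  next
    fix s assume s: "s \<in> S"
    have "(\<Sum>i<a+b. x i powi s) = (\<Sum>i<a. x1 i powi s) + (\<Sum>i<b. x2 i powi s)"
      by (simp add: sum_split_nat x_def)
    moreover have "(\<Sum>i<a+b. y i powi s) = (\<Sum>i<a. y1 i powi s) + (\<Sum>i<b. y2 i powi s)"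
      by (simp add: sum_split_nat y_def)
    ultimately show "v s + w s = (\<Sum>i<a+b. x i powi s) - (\<Sum>j<a+b. y j powi s)"
      using h1(3) h2(3) s by simp
  qed
qed

lemma rep_neg: "rep S k v \<Longrightarrow> rep S k (\<lambda>s. - v s)"
  unfolding rep_def by (metis minus_diff_eq)

lemma rep_scale:
  assumes "rep S k v" "l \<noteq> 0"
  shows "rep S k (\<lambda>s. l powi s * v s)"
proof -
  from assms(1) obtain x y where h: "\<forall>i<k. x i \<noteq> 0" "\<forall>j<k. y j \<noteq> 0"
    "\<forall>s\<in>S. v s = (\<Sum>i<k. x i powi s) - (\<Sum>j<k. y j powi s)" unfolding rep_def by blast
  show ?thesis unfolding rep_def
    apply (rule exI[of _ "\<lambda>i. l * x i"], rule exI[of _ "\<lambda>i. l * y i"])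
    using h assms(2) by (simp add: power_int_mult_distrib sum_distrib_left right_diff_distrib)
qed

lemma rep_mono: "rep S k v \<Longrightarrow> k \<le> m \<Longrightarrow> rep S m v"
proof -
  assume a: "rep S k v" "k \<le> m"
  have "rep S (m - k) (\<lambda>s. 0)" unfolding rep_def
    by (rule exI[of _ "\<lambda>i. 1"], rule exI[of _ "\<lambda>i. 1"]) simp
  from rep_add[OF a(1) this] a(2) show ?thesis by simp
qed

lemma rep_natmult: "rep S k v \<Longrightarrow> rep S (n * k) (\<lambda>s. of_nat n * v s)"
proof (induction n)
  case 0 then show ?case using rep_zero by (simp add: rep_def)
next
  case (Suc n)
  from rep_add[OF Suc.IH[OF Suc.prems] Suc.prems] show ?case
    by (simp add: algebra_simps add.commute)
qed

lemma rep_intmult: "rep S k v \<Longrightarrow> rep S (nat \<bar>n\<bar> * k) (\<lambda>s. of_int n * v s)"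
proof (cases "n \<ge> 0")
  case True
  assume "rep S k v"
  from rep_natmult[OF this, of "nat n"] True show ?thesis by simp
next
  case False
  assume "rep S k v"
  from rep_neg[OF rep_natmult[OF this, of "nat (-n)"]] False show ?thesis by simp
qed

definition opval :: "(int \<times> nat) list \<Rightarrow> int \<Rightarrow> 'k::field" where
  "opval ops e = (\<Sum>p\<leftarrow>ops. of_int (fst p) * of_nat (snd p) powi e)"

definition wt :: "(int \<times> nat) list \<Rightarrow> nat" where
  "wt ops = (\<Sum>p\<leftarrow>ops. nat \<bar>fst p\<bar>)"

lemma rep_sumlist:
  assumes "\<And>p. p \<in> set ops \<Longrightarrow> rep S k (V p)"
  shows "rep S (wt ops * k) (\<lambda>s. \<Sum>p\<leftarrow>ops. of_int (fst p) * V p s)"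
  using assms
proof (induction ops)
  case Nil then show ?case using rep_zero by (simp add: wt_def)
next
  case (Cons a ops)
  have 1: "rep S (nat \<bar>fst a\<bar> * k) (\<lambda>s. of_int (fst a) * V a s)"
    using rep_intmult[OF Cons.prems[of a]] by simp
  have 2: "rep S (wt ops * k) (\<lambda>s. \<Sum>p\<leftarrow>ops. of_int (fst p) * V p s)"
    using Cons by auto
  from rep_add[OF 1 2] show ?case by (simp add: wt_def algebra_simps)
qed


lemma two_pow_eq_one: "(2::'k::field_char_0) ^ m = 1 \<Longrightarrow> m = 0"
proof -
  assume "(2::'k) ^ m = 1"
  hence "(of_nat (2 ^ m) :: 'k) = of_nat 1" by simp
  hence "(2::nat) ^ m = 1" using of_nat_eq_iff by blast
  thus "m = 0" by simp
qed

lemma two_powi_inj_aux: "e \<le> f \<Longrightarrow> (2::'k::field_char_0) powi e = 2 powi f \<Longrightarrow> e = f"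
proof -
  assume a: "e \<le> f" "(2::'k) powi e = 2 powi f"
  have "(2::'k) powi f = 2 powi e * 2 powi (f - e)"
    using power_int_add[of "2::'k" e "f - e"] by simp
  also have "2 powi (f - e) = (2::'k) ^ nat (f - e)"
    using power_int_of_nat[of "2::'k" "nat (f - e)"] a(1) by simp
  finally have "(2::'k) ^ nat (f - e) = 1" using a(2)
    by (metis mult_cancel_left1 power_int_eq_0_iff zero_neq_numeral)
  hence "nat (f - e) = 0" by (rule two_pow_eq_one)
  thus "e = f" using a(1) by simp
qed

lemma two_powi_inj: "(2::'k::field_char_0) powi e = 2 powi f \<Longrightarrow> e = f"
  by (metis linorder_le_cases two_powi_inj_aux)

lemma opval_step:
  "opval (map (\<lambda>p. (a * fst p, 2 * snd p)) ops @ map (\<lambda>p. (b * fst p, snd p)) ops) e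
   = (of_int a * 2 powi e + of_int b) * (opval ops e :: 'k::field)"
  by (induction ops) (auto simp: opval_def algebra_simps power_int_mult_distrib)

lemma ops_exist:
  assumes "finite F"
  shows "\<exists>ops. (\<forall>p\<in>set ops. snd p > 0) \<and> (\<forall>e\<in>F. opval ops e = (0::'k::field_char_0))
           \<and> (\<forall>e. e \<notin> F \<longrightarrow> opval ops e \<noteq> (0::'k))"
  using assms
proof (induction F rule: finite_induct)
  case empty
  show ?case by (rule exI[of _ "[(1,1)]"]) (simp add: opval_def)
next
  case (insert f F)
  then obtain ops where h: "\<forall>p\<in>set ops. snd p > 0" "\<forall>e\<in>F. opval ops e = (0::'k)"
    "\<forall>e. e \<notin> F \<longrightarrow> opval ops e \<noteq> (0::'k)" by blast
  define A where "A = nat \<bar>f\<bar>"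
  define B where "B = nat (\<bar>f\<bar> + f)"
  define ops' where "ops' = map (\<lambda>p. (2^A * fst p, 2 * snd p)) ops @ map (\<lambda>p. (- (2^B) * fst p, snd p)) ops"
  have B2: "(2::'k) ^ B = 2 ^ A * 2 powi f"
  proof -
    have e1: "int B = int A + f" by (simp add: A_def B_def, arith)
    have "(2::'k) ^ B = 2 powi (int B)" by (rule power_int_of_nat[symmetric])
    also have "\<dots> = 2 powi (int A + f)" using e1 by simp
    also have "\<dots> = 2 powi (int A) * 2 powi f" by (simp add: power_int_add)
    finally show ?thesis by (simp add: power_int_of_nat)
  qed
  have val: "opval ops' e = (2 ^ A * (2 powi e - 2 powi f)) * (opval ops e :: 'k)" for e
    unfolding ops'_def opval_step by (simp add: B2 algebra_simps)
  show ?case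
  proof (intro exI conjI ballI allI impI)
    show "\<And>p. p \<in> set ops' \<Longrightarrow> snd p > 0" using h(1) by (auto simp: ops'_def)
  next
    fix e assume "e \<in> insert f F"
    then show "opval ops' e = (0::'k)" using h(2) by (auto simp: val)
  next
    fix e assume e: "e \<notin> insert f F"
    have "(2::'k) powi e \<noteq> 2 powi f" using e two_powi_inj by blast
    then show "opval ops' e \<noteq> (0::'k)" using h(3) e by (simp add: val)
  qed
qed


lemma swap_sum_list: "(\<Sum>p\<leftarrow>ops. c p * (\<Sum>k\<in>K. g p k)) = (\<Sum>k\<in>K. \<Sum>p\<leftarrow>ops. c p * g p k)"
  for c :: "_ \<Rightarrow> 'a::comm_ring"
  by (induction ops) (auto simp: sum_distrib_left sum.distrib)

lemma sl_pull: "(\<Sum>p\<leftarrow>ops. f p * (c * g p)) = c * (\<Sum>p\<leftarrow>ops. f p * g p)"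
  for c :: "'a::comm_ring"
  by (induction ops) (auto simp: algebra_simps)

lemma stepB_ops:
  assumes "d \<ge> 1"
  shows "\<exists>ops (\<nu>1::'k::field_char_0). (\<forall>p\<in>set ops. snd p > 0) \<and> (\<Sum>p\<leftarrow>ops. of_int (fst p)) = (0::'k)
     \<and> \<nu>1 \<noteq> 0 \<and> (\<forall>t. (\<Sum>p\<leftarrow>ops. of_int (fst p) * (1 + of_nat (snd p) * t) ^ d) = of_nat d * \<nu>1 * t)"
proof -
  obtain ops where h: "\<forall>p\<in>set ops. snd p > 0" "\<forall>e\<in>int ` ({..d} - {1}). opval ops e = (0::'k)"
    "\<forall>e. e \<notin> int ` ({..d} - {1}) \<longrightarrow> opval ops e \<noteq> (0::'k)"
    using ops_exist[of "int ` ({..d} - {1})"] by blast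
  define \<nu>1 where "\<nu>1 = (opval ops 1 :: 'k)"
  have n1: "\<nu>1 \<noteq> 0" using h(3) unfolding \<nu>1_def by force
  have s0: "(\<Sum>p\<leftarrow>ops. of_int (fst p)) = (0::'k)"
  proof -
    have "opval ops 0 = (0::'k)" using h(2) assms by force
    thus ?thesis by (simp add: opval_def)
  qed
  have ov: "opval ops (int k) = (\<Sum>p\<leftarrow>ops. of_int (fst p) * of_nat (snd p) ^ k)" for k
    by (simp add: opval_def power_int_of_nat)
  have bin: "(1 + a) ^ d = (\<Sum>k\<le>d. of_nat (d choose k) * a ^ k)" for a :: 'k
    by (subst add.commute) (simp add: binomial_ring)
  have main: "(\<Sum>p\<leftarrow>ops. of_int (fst p) * (1 + of_nat (snd p) * t) ^ d) = of_nat d * \<nu>1 * (t::'k)" for t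
  proof -
    have "(\<Sum>p\<leftarrow>ops. of_int (fst p) * (1 + of_nat (snd p) * t) ^ d)
        = (\<Sum>p\<leftarrow>ops. of_int (fst p) * (\<Sum>k\<le>d. of_nat (d choose k) * t ^ k * of_nat (snd p) ^ k))"
      by (simp only: bin power_mult_distrib mult_ac)
    also have "\<dots> = (\<Sum>k\<le>d. \<Sum>p\<leftarrow>ops. of_int (fst p) * (of_nat (d choose k) * t ^ k * of_nat (snd p) ^ k))"
      by (rule swap_sum_list)
    also have "\<dots> = (\<Sum>k\<le>d. of_nat (d choose k) * t ^ k * opval ops (int k))"
      unfolding ov
    proof (rule sum.cong[OF refl])
      fix k
      show "(\<Sum>p\<leftarrow>ops. of_int (fst p) * (of_nat (d choose k) * t ^ k * of_nat (snd p) ^ k)) =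
          of_nat (d choose k) * t ^ k * (\<Sum>p\<leftarrow>ops. of_int (fst p) * of_nat (snd p) ^ k)"
        by (rule sl_pull)
    qed
    also have "\<dots> = (\<Sum>k\<le>d. if k = 1 then of_nat d * \<nu>1 * t else 0)"
    proof (rule sum.cong)
      fix k assume "k \<in> {..d}"
      then show "of_nat (d choose k) * t ^ k * opval ops (int k) = (if k = 1 then of_nat d * \<nu>1 * t else 0)"
        using h(2) by (cases "k = 1") (auto simp: \<nu>1_def)
    qed simp
    also have "\<dots> = of_nat d * \<nu>1 * t" using assms by simp
    finally show ?thesis .
  qed
  show ?thesis using h(1) s0 n1 main by blast
qed


lemma powi_sel:
  fixes z :: "'k::field"
  assumes "s0 \<noteq> 0"
  shows "(if s0 > 0 then z else inverse z) powi s0 = z ^ nat \<bar>s0\<bar>"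
proof (cases "s0 > 0")
  case True
  then obtain n where "s0 = int n" by (metis less_imp_le nonneg_int_cases)
  then show ?thesis using True by (simp add: power_int_of_nat)
next
  case False
  define n where "n = nat \<bar>s0\<bar>"
  then have e: "s0 = - int n" using False by simp
  have "inverse z powi s0 = inverse (z powi s0)" by (simp add: power_int_inverse)
  also have "z powi s0 = inverse (z ^ n)"
    unfolding e by (simp add: power_int_minus power_int_of_nat)
  finally show ?thesis using False by (simp add: n_def)
qed

lemma sl_pull2: "(\<Sum>p\<leftarrow>ops. f p * (g p * c)) = (\<Sum>p\<leftarrow>ops. f p * g p) * c"
  for c :: "'a::comm_ring"
  by (induction ops) (auto simp: algebra_simps)

lemma sl_pull3: "(\<Sum>p\<leftarrow>ops. f p * (c * (a p - 1))) = c * ((\<Sum>p\<leftarrow>ops. f p * a p) - (\<Sum>p\<leftarrow>ops. f p))"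
  for c :: "'a::comm_ring_1"
  by (induction ops) (auto simp: algebra_simps)

lemma sl_zero: "(\<Sum>p\<leftarrow>ops. f p * (0::'a::comm_ring)) = 0"
  by (induction ops) auto

lemma coord:
  assumes "finite S" "s0 \<in> S" "s0 \<noteq> 0"
  shows "\<exists>M. \<forall>c::'k::field_char_0. rep S M (\<lambda>s. if s = s0 then c else 0)"
proof -
  obtain opsA where hA: "\<forall>p\<in>set opsA. snd p > 0" "\<forall>e\<in>S - {s0}. opval opsA e = (0::'k)"
    "\<forall>e. e \<notin> S - {s0} \<longrightarrow> opval opsA e \<noteq> (0::'k)"
    using ops_exist[of "S - {s0}"] assms(1) by blast
  define \<nu> where "\<nu> = (opval opsA s0 :: 'k)"
  have nu: "\<nu> \<noteq> 0" using hA(3) by (simp add: \<nu>_def)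
  define CA where "CA = wt opsA"
  have claimA: "rep S CA (\<lambda>s. if s = s0 then \<nu> * (x powi s0 - y powi s0) else 0)"
    if xy: "x \<noteq> 0" "y \<noteq> (0::'k)" for x y
  proof -
    have base: "rep S 1 (\<lambda>s. x powi s - y powi s)" unfolding rep_def
      by (rule exI[of _ "\<lambda>_. x"], rule exI[of _ "\<lambda>_. y"]) (simp add: xy)
    have "rep S (wt opsA) (\<lambda>s. \<Sum>p\<leftarrow>opsA. of_int (fst p) * (of_nat (snd p) powi s * (x powi s - y powi s)))"
      using rep_sumlist[of opsA S 1, OF rep_scale[OF base]] hA(1) by auto
    then show ?thesis unfolding CA_def
    proof (rule rep_cong)
      fix s assume s: "s \<in> S"
      have "(\<Sum>p\<leftarrow>opsA. of_int (fst p) * (of_nat (snd p) powi s * (x powi s - y powi s)))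
          = opval opsA s * (x powi s - y powi s)"
        by (simp add: sl_pull2 opval_def)
      also have "\<dots> = (if s = s0 then \<nu> * (x powi s0 - y powi s0) else 0)"
        using hA(2) s by (auto simp: \<nu>_def)
      finally show "(\<Sum>p\<leftarrow>opsA. of_int (fst p) * (of_nat (snd p) powi s * (x powi s - y powi s)))
          = (if s = s0 then \<nu> * (x powi s0 - y powi s0) else 0)" .
    qed
  qed
  define d where "d = nat \<bar>s0\<bar>"
  have d1: "d \<ge> 1" using assms(3) by (simp add: d_def)
  obtain opsB and \<nu>1 :: 'k where hB: "\<forall>p\<in>set opsB. snd p > 0" "(\<Sum>p\<leftarrow>opsB. of_int (fst p)) = (0::'k)"
    "\<nu>1 \<noteq> 0" "\<forall>t. (\<Sum>p\<leftarrow>opsB. of_int (fst p) * (1 + of_nat (snd p) * t) ^ d) = of_nat d * \<nu>1 * t"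
    using stepB_ops[OF d1] by blast
  define Bd where "Bd = (\<lambda>p. - 1 / (of_nat (snd p) :: 'k)) ` set opsB"
  have finBd: "finite Bd" by (simp add: Bd_def)
  define CB where "CB = wt opsB * CA"
  have claimB: "rep S CB (\<lambda>s. if s = s0 then \<nu> * (of_nat d * \<nu>1 * t) else 0)"
    if t: "t \<notin> Bd" for t
  proof -
    have znz: "1 + of_nat (snd p) * t \<noteq> 0" if p: "p \<in> set opsB" for p
    proof
      assume "1 + of_nat (snd p) * t = 0"
      moreover have "(of_nat (snd p) :: 'k) \<noteq> 0" using hB(1) p by auto
      ultimately have "t = - 1 / of_nat (snd p)" by (simp add: field_simps add_eq_0_iff)
      then show False using t p by (auto simp: Bd_def)
    qed
    define X where "X p = (if s0 > 0 then (1 + of_nat (snd p) * t) else inverse (1 + of_nat (snd p) * t))" for p :: "int \<times> nat"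
    have Xp: "X p powi s0 = (1 + of_nat (snd p) * t) ^ d" for p
      unfolding X_def d_def by (rule powi_sel[OF assms(3)])
    have Xnz: "X p \<noteq> 0" if "p \<in> set opsB" for p
      using znz[OF that] by (simp add: X_def)
    have "rep S (wt opsB * CA) (\<lambda>s. \<Sum>p\<leftarrow>opsB. of_int (fst p) *
             (if s = s0 then \<nu> * (X p powi s0 - 1 powi s0) else 0))"
      by (rule rep_sumlist, rule claimA) (auto simp: Xnz)
    then show ?thesis unfolding CB_def
    proof (rule rep_cong)
      fix s assume "s \<in> S"
      show "(\<Sum>p\<leftarrow>opsB. of_int (fst p) * (if s = s0 then \<nu> * (X p powi s0 - 1 powi s0) else 0))
          = (if s = s0 then \<nu> * (of_nat d * \<nu>1 * t) else 0)"
      proof (cases "s = s0")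
        case True
        then show ?thesis using hB(2) hB(4) by (simp add: Xp sl_pull3)
      next
        case False
        then show ?thesis by (simp add: sl_zero)
      qed
    qed
  qed
  show ?thesis
  proof (intro exI allI)
    fix c :: 'k
    define T where "T = c / (\<nu> * of_nat d * \<nu>1)"
    have dnz: "(of_nat d :: 'k) \<noteq> 0" using d1 by simp
    obtain t1 where t1: "t1 \<notin> Bd \<union> (\<lambda>b. T - b) ` Bd"
      using ex_new_if_finite[OF infinite_UNIV_char_0, of "Bd \<union> (\<lambda>b. T - b) ` Bd"] finBd by auto
    have t2: "T - t1 \<notin> Bd"
    proof
      assume "T - t1 \<in> Bd"
      then have "T - (T - t1) \<in> (\<lambda>b. T - b) ` Bd" by blast
      then show False using t1 by simp
    qed
    have "rep S (CB + CB) (\<lambda>s. (if s = s0 then \<nu> * (of_nat d * \<nu>1 * t1) else 0)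
           + (if s = s0 then \<nu> * (of_nat d * \<nu>1 * (T - t1)) else 0))"
      by (rule rep_add; rule claimB) (use t1 t2 in auto)
    then show "rep S (CB + CB) (\<lambda>s. if s = s0 then c else 0)"
    proof (rule rep_cong)
      fix s
      have "\<nu> * (of_nat d * \<nu>1 * t1) + \<nu> * (of_nat d * \<nu>1 * (T - t1)) = c"
        using nu dnz hB(3) by (simp add: T_def field_simps)
      then show "(if s = s0 then \<nu> * (of_nat d * \<nu>1 * t1) else 0)
           + (if s = s0 then \<nu> * (of_nat d * \<nu>1 * (T - t1)) else 0) = (if s = s0 then c else 0)"
        by simp
    qed
  qed
qed

lemma rep_all:
  assumes "finite S" "0 \<notin> S"
  shows "\<exists>N::nat. \<forall>f. rep S N (f :: int \<Rightarrow> 'k::field_char_0)"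
proof -
  have "\<forall>s0\<in>S. \<exists>M. \<forall>c::'k. rep S M (\<lambda>s. if s = s0 then c else 0)"
    using coord assms by metis
  then obtain M where M: "\<forall>s0\<in>S. \<forall>c::'k. rep S (M s0) (\<lambda>s. if s = s0 then c else 0)"
    by metis
  have key: "finite T \<Longrightarrow> T \<subseteq> S \<Longrightarrow> rep S (\<Sum>s\<in>T. M s) (\<lambda>s. if s \<in> T then f s else (0::'k))" for T f
  proof (induction T rule: finite_induct)
    case empty then show ?case using rep_zero by simp
  next
    case (insert a T)
    have "rep S (M a + (\<Sum>s\<in>T. M s)) (\<lambda>s. (if s = a then f a else 0) + (if s \<in> T then f s else 0))"
      by (rule rep_add) (use M insert in auto)
    then have "rep S (M a + (\<Sum>s\<in>T. M s)) (\<lambda>s. if s \<in> insert a T then f s else 0)"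
      by (rule rep_cong) (use insert in auto)
    then show ?case using insert by simp
  qed
  show ?thesis
    by (rule exI[of _ "\<Sum>s\<in>S. M s"], rule allI, rule rep_cong[OF key[OF assms(1) order_refl]]) simp
qed

theorem theorem3p2:
  fixes S :: "int set"
  assumes "finite S" and "0 \<notin> S"
  shows "\<exists>N::nat. N > 0 \<and> XS S N = (S \<rightarrow>\<^sub>E (UNIV :: 'k::field_char_0 set))"
proof -
  obtain N0 where N0: "\<forall>f. rep S N0 (f :: int \<Rightarrow> 'k)" using rep_all[OF assms] by blast
  define N where "N = N0 + 1"
  have RN: "rep S N (f :: int \<Rightarrow> 'k)" for f using rep_mono[OF N0[rule_format, of f]] by (simp add: N_def)
  show ?thesis
  proof (intro exI conjI)
    show "N > 0" by (simp add: N_def)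
    show "XS S N = (S \<rightarrow>\<^sub>E (UNIV :: 'k set))"
    proof
      show "XS S N \<subseteq> (S \<rightarrow>\<^sub>E (UNIV :: 'k set))" unfolding XS_def by auto
    next
      show "(S \<rightarrow>\<^sub>E (UNIV :: 'k set)) \<subseteq> XS S N"
      proof
        fix f :: "int \<Rightarrow> 'k" assume f: "f \<in> S \<rightarrow>\<^sub>E UNIV"
        obtain x y where h: "\<forall>i<N. x i \<noteq> 0" "\<forall>j<N. y j \<noteq> 0"
          "\<forall>s\<in>S. f s = (\<Sum>i<N. x i powi s) - (\<Sum>j<N. y j powi s)"
          using RN[of f] unfolding rep_def by blast
        have "f = (\<lambda>s\<in>S. (\<Sum>i<N. gammaS S (x i) s) - (\<Sum>j<N. gammaS S (y j) s))"
        proof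
          fix s show "f s = (\<lambda>s\<in>S. (\<Sum>i<N. gammaS S (x i) s) - (\<Sum>j<N. gammaS S (y j) s)) s"
            using h(3) f by (cases "s \<in> S") (auto simp: gammaS_def PiE_iff extensional_def)
        qed
        then show "f \<in> XS S N" unfolding XS_def using h(1,2) by blast
      qed
    qed
  qed
qed

end
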